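(* For $t>0$ the following are equivalent: (i) $K^t\mathbb H\subset\mathbb H$; (ii) $K^t_{\mathbb H}$ is a bounded operator defined on all of $\mathbb H$, i.e. $K^t_{\mathbb H}\in L(\mathbb H)$; (iii) $\operatorname{ran}C^t_{\mathbb H}\subset\operatorname{ran}C_{\mathbb H}$.
   Context: Let $\mathcal X\subset\mathbb R^d$ and consider the SDE $dX_t=b(X_t)\,dt+\sigma(X_t)\,dW_t$ ($W_t$ $d$-dimensional Brownian motion, $b,\sigma$ Lipschitz with $(1+\|x\|_2)^{-1}(\|b(x)\|_2+\|\sigma(x)\|_F)$ bounded), with transition kernel $\rho_t$ and invariant Borel probability measure $\mu$. Koopman operator $(K^t\psi)(x)=\int\psi(y)\rho_t(x,dy)$, a contraction on $L^2_\mu(\mathcal X)$. Let $k$ be a continuous symmetric positive definite kernel with RKHS $\mathbb H$, $\Phi(x)=k(x,\cdot)$, $\varphi(x)=k(x,x)$, satisfying (A1) $\varphi\in L^2_\mu$; (A2) $\psi\in L^2_\mu$ with $\iint k(x,y)\psi(x)\psi(y)d\mu d\mu=0$ implies $\psi=0$; (A3) $\psi\in\mathbb H$ with $\psi=0$ $\mu$-a.e. implies $\psi\equiv0$; so $\mathbb H\subset L^2_\mu$. Let $\mathcal E\psi=\int\psi\Phi\,d\mu$, $\mathcal E^*$ the inclusion $\mathbb H\hookrightarrow L^2_\mu$, $C_{\mathbb H}=\mathcal E\mathcal E^*$ (injective), $C^t_{\mathbb H}=\mathcal EK^t\mathcal E^*$. The operator $K^t_{\mathbb H}:=C_{\mathbb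 H}^{-1}C^t_{\mathbb H}$ is defined in $\mathbb H$ on the domain $\{\psi\in\mathbb H:C^t_{\mathbb H}\psi\in\operatorname{ran}C_{\mathbb H}\}$. $L(\mathbb H)$ denotes the bounded linear operators on $\mathbb H$. *)

theory Defs
  imports "HOL-Analysis.Analysis" "HOL-Probability.Probability"
begin

definition feat :: "'a set \<Rightarrow> ('a \<Rightarrow> 'a \<Rightarrow> real) \<Rightarrow> 'a \<Rightarrow> ('a \<Rightarrow> real)" where
  "feat X k x = (\<lambda>y. if y \<in> X then k x y else 0)"

definition pd_kernel :: "'a set \<Rightarrow> ('a \<Rightarrow> 'a \<Rightarrow> real) \<Rightarrow> bool" where
  "pd_kernel X k \<longleftrightarrow> (\<forall>x\<in>X. \<forall>y\<in>X. k x y = k y x) \<and>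
     (\<forall>(n::nat) (xs::nat \<Rightarrow> 'a) (a::nat \<Rightarrow> real). (\<forall>i<n. xs i \<in> X) \<longrightarrow>
        0 \<le> (\<Sum>i<n. \<Sum>j<n. a i * a j * k (xs i) (xs j)))"

definition hnorm :: "(('a \<Rightarrow> real) \<Rightarrow> ('a \<Rightarrow> real) \<Rightarrow> real) \<Rightarrow> ('a \<Rightarrow> real) \<Rightarrow> real" where
  "hnorm ip f = sqrt (ip f f)"

definition is_rkhs :: "'a set \<Rightarrow> ('a \<Rightarrow> 'a \<Rightarrow> real) \<Rightarrow> ('a \<Rightarrow> real) set
     \<Rightarrow> (('a \<Rightarrow> real) \<Rightarrow> ('a \<Rightarrow> real) \<Rightarrow> real) \<Rightarrow> bool" where
  "is_rkhs X k H ip \<longleftrightarrow>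
     (\<forall>f\<in>H. \<forall>x. x \<notin> X \<longrightarrow> f x = 0) \<and>
     (\<lambda>x. 0) \<in> H \<and> (\<forall>f\<in>H. \<forall>g\<in>H. (\<lambda>x. f x + g x) \<in> H) \<and> (\<forall>c. \<forall>f\<in>H. (\<lambda>x. c * f x) \<in> H) \<and>
     (\<forall>f\<in>H. \<forall>g\<in>H. ip f g = ip g f) \<and>
     (\<forall>f\<in>H. \<forall>g\<in>H. \<forall>h\<in>H. ip (\<lambda>x. f x + g x) h = ip f h + ip g h) \<and>
     (\<forall>c. \<forall>f\<in>H. \<forall>g\<in>H. ip (\<lambda>x. c * f x) g = c * ip f g) \<and>
     (\<forall>f\<in>H. 0 \<le> ip f f \<and> (ip f f = 0 \<longrightarrow> f = (\<lambda>x. 0))) \<and>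
     (\<forall>s::nat \<Rightarrow> ('a \<Rightarrow> real). (\<forall>n. s n \<in> H) \<longrightarrow>
        (\<forall>e>0. \<exists>N. \<forall>m\<ge>N. \<forall>n\<ge>N. hnorm ip (\<lambda>x. s m x - s n x) < e) \<longrightarrow>
        (\<exists>f\<in>H. (\<lambda>n. hnorm ip (\<lambda>x. s n x - f x)) \<longlonglongrightarrow> 0)) \<and>
     (\<forall>x\<in>X. feat X k x \<in> H) \<and>
     (\<forall>x\<in>X. \<forall>f\<in>H. ip f (feat X k x) = f x)"

text \<open>Square-integrable functions w.r.t. mu (representatives of L^2_mu).\<close>
definition L2 :: "'a measure \<Rightarrow> ('a \<Rightarrow> real) set" where
  "L2 M = {f \<in> borel_measurable M. integrable M (\<lambda>x. (f x)\<^sup>2)}"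

definition koopman :: "('a \<Rightarrow> 'a measure) \<Rightarrow> ('a \<Rightarrow> real) \<Rightarrow> ('a \<Rightarrow> real)" where
  "koopman \<rho> \<psi> = (\<lambda>x. \<integral>y. \<psi> y \<partial>(\<rho> x))"

text \<open>The operator E psi = int psi Phi dmu, written pointwise:
  (E psi)(x) = <E psi, Phi(x)>_H = int psi(y) k(y,x) dmu(y) for x in X.\<close>
definition Eop :: "'a measure \<Rightarrow> ('a \<Rightarrow> 'a \<Rightarrow> real) \<Rightarrow> ('a \<Rightarrow> real) \<Rightarrow> ('a \<Rightarrow> real)" where
  "Eop M k \<psi> = (\<lambda>x. if x \<in> space M then \<integral>y. \<psi> y * k y x \<partial>M else 0)"

text \<open>C_H = E E^* (E^* the inclusion H into L^2_mu) and C^t_H = E K^t E^*, restricted to H.\<close>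
definition CH :: "'a measure \<Rightarrow> ('a \<Rightarrow> 'a \<Rightarrow> real) \<Rightarrow> ('a \<Rightarrow> real) \<Rightarrow> ('a \<Rightarrow> real)" where
  "CH M k \<psi> = Eop M k \<psi>"

definition CHt :: "'a measure \<Rightarrow> ('a \<Rightarrow> 'a \<Rightarrow> real) \<Rightarrow> ('a \<Rightarrow> 'a measure) \<Rightarrow> ('a \<Rightarrow> real) \<Rightarrow> ('a \<Rightarrow> real)" where
  "CHt M k \<rho> \<psi> = Eop M k (koopman \<rho> \<psi>)"

definition KH_dom :: "'a measure \<Rightarrow> ('a \<Rightarrow> 'a \<Rightarrow> real) \<Rightarrow> ('a \<Rightarrow> real) set \<Rightarrow> ('a \<Rightarrow> 'a measure) \<Rightarrow> ('a \<Rightarrow> real) set" where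
  "KH_dom M k H \<rho> = {\<psi> \<in> H. CHt M k \<rho> \<psi> \<in> CH M k ` H}"

definition KH :: "'a measure \<Rightarrow> ('a \<Rightarrow> 'a \<Rightarrow> real) \<Rightarrow> ('a \<Rightarrow> real) set \<Rightarrow> ('a \<Rightarrow> 'a measure) \<Rightarrow> ('a \<Rightarrow> real) \<Rightarrow> ('a \<Rightarrow> real)" where
  "KH M k H \<rho> \<psi> = (THE \<phi>. \<phi> \<in> H \<and> CH M k \<phi> = CHt M k \<rho> \<psi>)"

end

theory Submission
  imports Defs
begin

locale rkh =
  fixes X :: "'a set" and k :: "'a \<Rightarrow> 'a \<Rightarrow> real" and H :: "('a \<Rightarrow> real) set"
    and ip :: "('a \<Rightarrow> real) \<Rightarrow> ('a \<Rightarrow> real) \<Rightarrow> real"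
  assumes rkhs: "is_rkhs X k H ip"
begin

lemma H_out: "f \<in> H \<Longrightarrow> x \<notin> X \<Longrightarrow> f x = 0"
  using rkhs unfolding is_rkhs_def by blast
lemma H_zero[simp]: "(\<lambda>x. 0) \<in> H"
  using rkhs unfolding is_rkhs_def by blast
lemma H_add: "f \<in> H \<Longrightarrow> g \<in> H \<Longrightarrow> (\<lambda>x. f x + g x) \<in> H"
  using rkhs unfolding is_rkhs_def by blast
lemma H_scale: "f \<in> H \<Longrightarrow> (\<lambda>x. c * f x) \<in> H"
  using rkhs unfolding is_rkhs_def by blast
lemma ip_sym: "f \<in> H \<Longrightarrow> g \<in> H \<Longrightarrow> ip f g = ip g f"
  using rkhs unfolding is_rkhs_def by blast
lemma ip_add: "f \<in> H \<Longrightarrow> g \<in> H \<Longrightarrow> h \<in> H \<Longrightarrow> ip (\<lambda>x. f x + g x) h = ip f h + ip g h"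
  using rkhs unfolding is_rkhs_def by blast
lemma ip_scale: "f \<in> H \<Longrightarrow> g \<in> H \<Longrightarrow> ip (\<lambda>x. c * f x) g = c * ip f g"
  using rkhs unfolding is_rkhs_def by blast
lemma ip_pos: "f \<in> H \<Longrightarrow> 0 \<le> ip f f"
  using rkhs unfolding is_rkhs_def by blast
lemma ip_zeroD: "f \<in> H \<Longrightarrow> ip f f = 0 \<Longrightarrow> f = (\<lambda>x. 0)"
  using rkhs unfolding is_rkhs_def by blast
lemma H_complete: "(\<And>n. s n \<in> H) \<Longrightarrow>
        (\<forall>e>0. \<exists>N. \<forall>m\<ge>N. \<forall>n\<ge>N. hnorm ip (\<lambda>x. s m x - s n x) < e) \<Longrightarrow>
        (\<exists>f\<in>H. (\<lambda>n. hnorm ip (\<lambda>x. s n x - f x)) \<longlonglongrightarrow> 0)"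
  using rkhs unfolding is_rkhs_def by blast
lemma feat_H: "x \<in> X \<Longrightarrow> feat X k x \<in> H"
  using rkhs unfolding is_rkhs_def by blast
lemma repr: "x \<in> X \<Longrightarrow> f \<in> H \<Longrightarrow> ip f (feat X k x) = f x"
  using rkhs unfolding is_rkhs_def by blast

lemma H_lin: "f \<in> H \<Longrightarrow> g \<in> H \<Longrightarrow> (\<lambda>x. a * f x + b * g x) \<in> H"
  by (intro H_add H_scale)
lemma H_diff: "f \<in> H \<Longrightarrow> g \<in> H \<Longrightarrow> (\<lambda>x. f x - g x) \<in> H"
  using H_lin[of f g 1 "-1"] by simp

lemma ip_lin: "f \<in> H \<Longrightarrow> g \<in> H \<Longrightarrow> h \<in> H \<Longrightarrow>
   ip (\<lambda>x. a * f x + b * g x) h = a * ip f h + b * ip g h"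
  by (subst ip_add) (auto intro: H_scale simp: ip_scale)
lemma ip_lin_r: "f \<in> H \<Longrightarrow> g \<in> H \<Longrightarrow> h \<in> H \<Longrightarrow>
   ip h (\<lambda>x. a * f x + b * g x) = a * ip h f + b * ip h g"
  by (simp add: ip_sym[of h] H_lin ip_lin)
lemma ip_diff: "f \<in> H \<Longrightarrow> g \<in> H \<Longrightarrow> h \<in> H \<Longrightarrow> ip (\<lambda>x. f x - g x) h = ip f h - ip g h"
  using ip_lin[of f g h 1 "-1"] by simp
lemma ip_diff_r: "f \<in> H \<Longrightarrow> g \<in> H \<Longrightarrow> h \<in> H \<Longrightarrow> ip h (\<lambda>x. f x - g x) = ip h f - ip h g"
  using ip_lin_r[of f g h 1 "-1"] by simp
lemma ip_add_r: "f \<in> H \<Longrightarrow> g \<in> H \<Longrightarrow> h \<in> H \<Longrightarrow> ip h (\<lambda>x. f x + g x) = ip h f + ip h g"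
  using ip_lin_r[of f g h 1 1] by simp
lemma ip_scale_r: "f \<in> H \<Longrightarrow> g \<in> H \<Longrightarrow> ip g (\<lambda>x. c * f x) = c * ip g f"
  by (simp add: ip_sym[of g] H_scale ip_scale)
lemma ip_zero_l[simp]: "f \<in> H \<Longrightarrow> ip (\<lambda>x. 0) f = 0"
  using ip_scale[of "\<lambda>x. 0" f 0] by simp
lemma ip_zero_r[simp]: "f \<in> H \<Longrightarrow> ip f (\<lambda>x. 0) = 0"
  using ip_zero_l ip_sym by fastforce

lemma ip_quad: assumes "f \<in> H" "g \<in> H"
  shows "ip (\<lambda>x. a * f x + b * g x) (\<lambda>x. a * f x + b * g x) = a\<^sup>2 * ip f f + 2 * a * b * ip f g + b\<^sup>2 * ip g g"
proof -
  have "ip (\<lambda>x. a * f x + b * g x) (\<lambda>x. a * f x + b * g x) = a * ip f (\<lambda>x. a * f x + b * g x) + b * ip g (\<lambda>x. a * f x + b * g x)"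
    by (rule ip_lin[OF assms H_lin[OF assms]])
  also have "\<dots> = a * (a * ip f f + b * ip f g) + b * (a * ip g f + b * ip g g)"
    using ip_lin_r[OF assms assms(1)] ip_lin_r[OF assms assms(2)] by simp
  finally show ?thesis using ip_sym[OF assms] by (simp add: power2_eq_square algebra_simps)
qed

lemma cs: assumes "f \<in> H" "g \<in> H" shows "(ip f g)\<^sup>2 \<le> ip f f * ip g g"
proof (cases "ip g g = 0")
  case True
  then have "g = (\<lambda>x. 0)" using ip_zeroD assms by blast
  then show ?thesis using assms by simp
next
  case False
  then have gp: "ip g g > 0" using ip_pos[OF assms(2)] by linarith
  define c where "c = - ip f g / ip g g"
  have "0 \<le> ip (\<lambda>x. 1 * f x + c * g x) (\<lambda>x. 1 * f x + c * g x)"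
    using ip_pos H_lin assms by blast
  also have "\<dots> = 1\<^sup>2 * ip f f + 2 * 1 * c * ip f g + c\<^sup>2 * ip g g"
    by (rule ip_quad[OF assms])
  also have "\<dots> = ip f f - (ip f g)\<^sup>2 / ip g g"
    using gp by (simp add: c_def field_simps power2_eq_square)
  finally show ?thesis using gp by (simp add: field_simps)
qed

definition nrm where "nrm f = hnorm ip f"

lemma nrm_sq: "f \<in> H \<Longrightarrow> (nrm f)\<^sup>2 = ip f f"
  by (simp add: nrm_def hnorm_def ip_pos)
lemma nrm_nonneg: "f \<in> H \<Longrightarrow> 0 \<le> nrm f"
  by (simp add: nrm_def hnorm_def ip_pos)
lemma nrm_zero[simp]: "nrm (\<lambda>x. 0) = 0"
  by (simp add: nrm_def hnorm_def)
lemma nrm_eq0: "f \<in> H \<Longrightarrow> nrm f = 0 \<Longrightarrow> f = (\<lambda>x. 0)"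
  by (metis ip_zeroD nrm_sq power2_eq_square mult_zero_left)

lemma cs_nrm: assumes "f \<in> H" "g \<in> H" shows "\<bar>ip f g\<bar> \<le> nrm f * nrm g"
proof -
  have "(ip f g)\<^sup>2 \<le> (nrm f * nrm g)\<^sup>2"
    using cs[OF assms] by (simp add: power_mult_distrib nrm_sq assms)
  then have "\<bar>ip f g\<bar>\<^sup>2 \<le> (nrm f * nrm g)\<^sup>2" by simp
  then show ?thesis using nrm_nonneg assms
    by (meson power2_le_imp_le mult_nonneg_nonneg)
qed

lemma nrm_lin_sq: assumes "f \<in> H" "g \<in> H"
  shows "(nrm (\<lambda>x. a * f x + b * g x))\<^sup>2 = a\<^sup>2 * (nrm f)\<^sup>2 + 2 * a * b * ip f g + b\<^sup>2 * (nrm g)\<^sup>2"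
  using assms by (simp add: nrm_sq H_lin ip_quad)

lemma nrm_scale: assumes "f \<in> H" shows "nrm (\<lambda>x. c * f x) = \<bar>c\<bar> * nrm f"
proof -
  have "(nrm (\<lambda>x. c * f x))\<^sup>2 = (\<bar>c\<bar> * nrm f)\<^sup>2"
    using nrm_lin_sq[OF assms H_zero, of c 0] by (simp add: power_mult_distrib)
  then show ?thesis using nrm_nonneg assms H_scale
    by (metis abs_ge_zero mult_nonneg_nonneg power2_eq_imp_eq)
qed

lemma nrm_lin_le: assumes "f \<in> H" "g \<in> H"
  shows "nrm (\<lambda>x. a * f x + b * g x) \<le> \<bar>a\<bar> * nrm f + \<bar>b\<bar> * nrm g"
proof -
  have "a * b * ip f g \<le> \<bar>a\<bar> * \<bar>b\<bar> * (nrm f * nrm g)"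
  proof -
    have "a * b * ip f g \<le> \<bar>a * b * ip f g\<bar>" by simp
    also have "\<dots> = \<bar>a\<bar> * \<bar>b\<bar> * \<bar>ip f g\<bar>" by (simp add: abs_mult)
    also have "\<dots> \<le> \<bar>a\<bar> * \<bar>b\<bar> * (nrm f * nrm g)"
      using cs_nrm[OF assms] by (simp add: mult_left_mono)
    finally show ?thesis .
  qed
  then have "(nrm (\<lambda>x. a * f x + b * g x))\<^sup>2 \<le> (\<bar>a\<bar> * nrm f + \<bar>b\<bar> * nrm g)\<^sup>2"
    unfolding nrm_lin_sq[OF assms] by (simp add: power2_eq_square algebra_simps)
  then show ?thesis using nrm_nonneg assms
    by (meson abs_ge_zero add_nonneg_nonneg mult_nonneg_nonneg power2_le_imp_le)
qed

lemma nrm_add_le: "f \<in> H \<Longrightarrow> g \<in> H \<Longrightarrow> nrm (\<lambda>x. f x + g x) \<le> nrm f + nrm g"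
  using nrm_lin_le[of f g 1 1] by simp
lemma nrm_diff_le: "f \<in> H \<Longrightarrow> g \<in> H \<Longrightarrow> nrm (\<lambda>x. f x - g x) \<le> nrm f + nrm g"
  using nrm_lin_le[of f g 1 "-1"] by simp
lemma nrm_diff_sym: "f \<in> H \<Longrightarrow> g \<in> H \<Longrightarrow> nrm (\<lambda>x. f x - g x) = nrm (\<lambda>x. g x - f x)"
  using nrm_scale[of "\<lambda>x. g x - f x" "-1"] H_diff by simp

lemma nrm_tri: assumes "f \<in> H" "g \<in> H" "h \<in> H"
  shows "nrm (\<lambda>x. f x - h x) \<le> nrm (\<lambda>x. f x - g x) + nrm (\<lambda>x. g x - h x)"
  using nrm_add_le[of "\<lambda>x. f x - g x" "\<lambda>x. g x - h x"] assms H_diff by simp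

lemma feat_ip: "x \<in> X \<Longrightarrow> y \<in> X \<Longrightarrow> ip (feat X k x) (feat X k y) = k x y"
  using repr[OF _ feat_H, of y x] by (simp add: feat_def)
lemma k_sym: "x \<in> X \<Longrightarrow> y \<in> X \<Longrightarrow> k x y = k y x"
  by (metis feat_ip ip_sym feat_H)
lemma k_diag_nonneg: "x \<in> X \<Longrightarrow> 0 \<le> k x x"
  by (metis feat_ip ip_pos feat_H)
lemma nrm_feat: "x \<in> X \<Longrightarrow> nrm (feat X k x) = sqrt (k x x)"
  by (simp add: nrm_def hnorm_def feat_ip)

lemma pt_bound: assumes "f \<in> H" "x \<in> X" shows "\<bar>f x\<bar> \<le> nrm f * sqrt (k x x)"
  using cs_nrm[OF assms(1) feat_H[OF assms(2)]] repr[OF assms(2,1)] nrm_feat[OF assms(2)] by simp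

lemma pt_bound_sq: assumes "f \<in> H" "x \<in> X" shows "(f x)\<^sup>2 \<le> (nrm f)\<^sup>2 * k x x"
proof -
  have "(f x)\<^sup>2 = \<bar>f x\<bar>\<^sup>2" by simp
  also have "\<dots> \<le> (nrm f * sqrt (k x x))\<^sup>2"
    by (rule power_mono[OF pt_bound[OF assms]]) simp
  also have "\<dots> = (nrm f)\<^sup>2 * k x x" using k_diag_nonneg[OF assms(2)] by (simp add: power_mult_distrib)
  finally show ?thesis .
qed

end

context rkh begin

definition hd where "hd f g = (if f \<in> H \<and> g \<in> H then nrm (\<lambda>x. f x - g x) else 0)"

lemma hd_metric: "Metric_space H hd"
proof
  show "0 \<le> hd x y" for x y unfolding hd_def using nrm_nonneg H_diff by auto
  show "hd x y = hd y x" for x y unfolding hd_def using nrm_diff_sym by auto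
  show "x \<in> H \<Longrightarrow> y \<in> H \<Longrightarrow> (hd x y = 0) = (x = y)" for x y
  proof -
    assume a: "x \<in> H" "y \<in> H"
    have "hd x y = 0 \<Longrightarrow> x = y"
    proof -
      assume "hd x y = 0"
      then have "(\<lambda>z. x z - y z) = (\<lambda>z. 0)" using nrm_eq0 H_diff a unfolding hd_def by auto
      then show "x = y" by (metis (no_types) eq_iff_diff_eq_0 ext)
    qed
    then show ?thesis using a unfolding hd_def by auto
  qed
  show "x \<in> H \<Longrightarrow> y \<in> H \<Longrightarrow> z \<in> H \<Longrightarrow> hd x z \<le> hd x y + hd y z" for x y z
    unfolding hd_def using nrm_tri by auto
qed

interpretation HM: Metric_space H hd by (rule hd_metric)

lemma HM_limitin: assumes "range \<sigma> \<subseteq> H" "l \<in> H"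
  shows "limitin HM.mtopology \<sigma> l sequentially \<longleftrightarrow> (\<lambda>m. nrm (\<lambda>x. \<sigma> m x - l x)) \<longlonglongrightarrow> 0"
proof -
  have nn: "0 \<le> nrm (\<lambda>x. \<sigma> m x - l x)" for m using assms H_diff nrm_nonneg by blast
  have s: "\<sigma> m \<in> H" for m using assms by auto
  have "limitin HM.mtopology \<sigma> l sequentially \<longleftrightarrow> (\<forall>e>0. eventually (\<lambda>m. nrm (\<lambda>x. \<sigma> m x - l x) < e) sequentially)"
    unfolding HM.limitin_metric hd_def using assms by (simp add: s)
  also have "\<dots> \<longleftrightarrow> (\<lambda>m. nrm (\<lambda>x. \<sigma> m x - l x)) \<longlonglongrightarrow> 0"
    unfolding tendsto_iff dist_real_def using nn by auto
  finally show ?thesis .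
qed

lemma HM_complete: "HM.mcomplete"
  unfolding HM.mcomplete_def
proof (intro allI impI)
  fix \<sigma> assume c: "HM.MCauchy \<sigma>"
  then have r: "range \<sigma> \<subseteq> H" unfolding HM.MCauchy_def by auto
  then have s: "\<sigma> m \<in> H" for m by auto
  have "\<forall>e>0. \<exists>N. \<forall>m\<ge>N. \<forall>n\<ge>N. hnorm ip (\<lambda>x. \<sigma> m x - \<sigma> n x) < e"
    using c unfolding HM.MCauchy_def hd_def nrm_def by (simp add: s)
  then obtain f where f: "f \<in> H" "(\<lambda>n. hnorm ip (\<lambda>x. \<sigma> n x - f x)) \<longlonglongrightarrow> 0"
    using H_complete r by blast
  then show "\<exists>x. limitin HM.mtopology \<sigma> x sequentially"
    using HM_limitin[OF r f(1)] unfolding nrm_def by blast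
qed

lemma T_zero: assumes Tlin: "\<forall>f\<in>H. \<forall>g\<in>H. \<forall>a b. T (\<lambda>x. a * f x + b * g x) = (\<lambda>x. a * T f x + b * T g x)"
  shows "T (\<lambda>x. 0) = (\<lambda>x. 0)"
  using Tlin[rule_format, OF H_zero H_zero, of 0 0] by simp

lemma bounded_by_baire:
  assumes TH: "\<forall>\<psi>\<in>H. T \<psi> \<in> H"
    and Tlin: "\<forall>f\<in>H. \<forall>g\<in>H. \<forall>a b. T (\<lambda>x. a * f x + b * g x) = (\<lambda>x. a * T f x + b * T g x)"
    and closed: "\<And>n \<sigma> l. (\<forall>m. \<sigma> m \<in> H) \<Longrightarrow> (\<forall>m. nrm (T (\<sigma> m)) \<le> n) \<Longrightarrow> l \<in> H \<Longrightarrow>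
         (\<lambda>m. nrm (\<lambda>x. \<sigma> m x - l x)) \<longlonglongrightarrow> 0 \<Longrightarrow> nrm (T l) \<le> n"
  shows "\<exists>B. \<forall>\<psi>\<in>H. nrm (T \<psi>) \<le> B * nrm \<psi>"
proof -
  define F where "F n = {\<psi>\<in>H. nrm (T \<psi>) \<le> real n}" for n :: nat
  have Fc: "closedin HM.mtopology (F n)" for n
    unfolding HM.metric_closedin_iff_sequentially_closed
  proof (intro conjI allI impI)
    show "F n \<subseteq> H" unfolding F_def by auto
    fix \<sigma> l assume a: "range \<sigma> \<subseteq> F n \<and> limitin HM.mtopology \<sigma> l sequentially"
    then have r: "range \<sigma> \<subseteq> H" and l: "l \<in> H" unfolding F_def
      using HM.limitin_mspace by auto
    have s1: "\<forall>m. \<sigma> m \<in> H" using r by blast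
    have s2: "\<forall>m. nrm (T (\<sigma> m)) \<le> real n" using a unfolding F_def by blast
    have s3: "(\<lambda>m. nrm (\<lambda>x. \<sigma> m x - l x)) \<longlonglongrightarrow> 0" using a HM_limitin[OF r l] by blast
    have "nrm (T l) \<le> real n"
      by (rule closed[OF s1 s2 l s3])
    then show "l \<in> F n" using l unfolding F_def by auto
  qed
  have "\<exists>n. HM.mtopology interior_of (F n) \<noteq> {}"
  proof (rule ccontr)
    assume "\<not> ?thesis"
    then have "HM.mtopology interior_of \<Union>(range F) = {}"
      by (intro HM.metric_Baire_category_alt HM_complete) (auto simp: Fc)
    moreover have U: "\<Union>(range F) = H"
    proof -
      have "\<psi> \<in> F (nat \<lceil>nrm (T \<psi>)\<rceil>)" if "\<psi> \<in> H" for \<psi>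
        using that unfolding F_def by (simp add: real_nat_ceiling_ge)
      then show ?thesis unfolding F_def by auto
    qed
    ultimately have "HM.mtopology interior_of H = {}" by simp
    moreover have "HM.mtopology interior_of H = H"
      by (metis HM.topspace_mtopology interior_of_topspace)
    ultimately show False using H_zero by blast
  qed
  then obtain n \<psi>0 where p0: "\<psi>0 \<in> HM.mtopology interior_of (F n)" by blast
  have "openin HM.mtopology (HM.mtopology interior_of (F n))" by simp
  from HM.openin_mtopology[THEN iffD1, THEN conjunct2, rule_format, OF this p0]
  obtain r where r0: "r > 0" "HM.mball \<psi>0 r \<subseteq> HM.mtopology interior_of (F n)" by auto
  have r: "r > 0" "HM.mball \<psi>0 r \<subseteq> F n"
    using r0(1) apply simp
    using r0(2) interior_of_subset[of HM.mtopology "F n"] by (rule subset_trans)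
  have pF: "\<psi>0 \<in> F n" using p0 interior_of_subset[of HM.mtopology "F n"] by (rule subsetD[rotated])
  then have psi0: "\<psi>0 \<in> H" unfolding F_def by simp
  have T0: "nrm (T \<psi>0) \<le> real n" using pF unfolding F_def by simp
  show ?thesis
  proof (intro exI ballI)
    fix h assume h: "h \<in> H"
    show "nrm (T h) \<le> (4 * real n / r) * nrm h"
    proof (cases "nrm h = 0")
      case True
      then have "h = (\<lambda>x. 0)" using nrm_eq0 h by blast
      then show ?thesis using T_zero[OF Tlin] by simp
    next
      case False
      then have hp: "nrm h > 0" using nrm_nonneg[OF h] by linarith
      define c where "c = r / (2 * nrm h)"
      have cp: "c > 0" using hp r by (simp add: c_def)
      define \<psi> where "\<psi> = (\<lambda>x. 1 * \<psi>0 x + c * h x)"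
      have psiH: "\<psi> \<in> H" unfolding \<psi>_def using H_lin psi0 h by blast
      have "hd \<psi>0 \<psi> = nrm (\<lambda>x. (- c) * h x)"
        unfolding hd_def \<psi>_def using psi0 psiH h \<psi>_def by simp
      also have "\<dots> = c * nrm h" using nrm_scale[OF h, of "-c"] cp by simp
      also have "\<dots> = r / 2" using hp by (simp add: c_def)
      finally have "\<psi> \<in> HM.mball \<psi>0 r" using psi0 psiH r by simp
      then have "\<psi> \<in> F n" using r by blast
      then have Tpsi: "nrm (T \<psi>) \<le> real n" unfolding F_def by simp
      have "T \<psi> = (\<lambda>x. 1 * T \<psi>0 x + c * T h x)" unfolding \<psi>_def by (rule Tlin[rule_format, OF psi0 h])
      then have "(\<lambda>x. c * T h x) = (\<lambda>x. 1 * T \<psi> x + (-1) * T \<psi>0 x)" by auto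
      then have "nrm (\<lambda>x. c * T h x) \<le> \<bar>1\<bar> * nrm (T \<psi>) + \<bar>-1\<bar> * nrm (T \<psi>0)"
        using nrm_lin_le[of "T \<psi>" "T \<psi>0" 1 "-1"] TH psiH psi0 by simp
      moreover have "nrm (\<lambda>x. c * T h x) = c * nrm (T h)"
        using nrm_scale[of "T h" c] TH h cp by simp
      ultimately have "c * nrm (T h) \<le> 1 * nrm (T \<psi>) + 1 * nrm (T \<psi>0)" by simp
      also have "\<dots> \<le> 2 * real n" using Tpsi T0 by simp
      finally have "nrm (T h) \<le> 2 * real n / c" using cp by (simp add: field_simps)
      also have "\<dots> = (4 * real n / r) * nrm h" using hp r by (simp add: c_def field_simps)
      finally show ?thesis .
    qed
  qed
qed

end

lemma aux_ineq: fixes A B dm dl M DD p q :: real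
  assumes "A < dm + p" "B < dl + q" "dm \<le> M" "dl \<le> DD" "q \<le> p"
  shows "2*A + 2*B - 4*M \<le> 2*(DD - dm) + 4*p" using assms by (smt (verit))

context rkh begin

lemma H_sum: "finite J \<Longrightarrow> (\<forall>j\<in>J. f j \<in> H) \<Longrightarrow> (\<lambda>x. \<Sum>j\<in>J. c j * f j x) \<in> H"
proof (induction J rule: finite_induct)
  case empty then show ?case by simp
next
  case (insert a J)
  have "(\<lambda>x. c a * f a x + (\<lambda>x. \<Sum>j\<in>J. c j * f j x) x) \<in> H"
    using insert by (intro H_add H_scale) auto
  then show ?case using insert by simp
qed

lemma nrm_sum_le: "finite J \<Longrightarrow> (\<forall>j\<in>J. f j \<in> H) \<Longrightarrow>
   nrm (\<lambda>x. \<Sum>j\<in>J. c j * f j x) \<le> (\<Sum>j\<in>J. \<bar>c j\<bar> * nrm (f j))"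
proof (induction J rule: finite_induct)
  case empty then show ?case by simp
next
  case (insert a J)
  let ?S = "\<lambda>x. \<Sum>j\<in>J. c j * f j x"
  have fJ: "\<forall>j\<in>J. f j \<in> H" using insert.prems by blast
  have SH: "?S \<in> H" using H_sum[OF insert.hyps(1) fJ] .
  have fa: "f a \<in> H" using insert.prems by blast
  have IH: "nrm ?S \<le> (\<Sum>j\<in>J. \<bar>c j\<bar> * nrm (f j))" using insert.IH[OF fJ] .
  have e1: "(\<lambda>x. \<Sum>j\<in>insert a J. c j * f j x) = (\<lambda>x. c a * f a x + 1 * ?S x)"
    using insert.hyps by (simp add: sum.insert)
  have "nrm (\<lambda>x. c a * f a x + 1 * ?S x) \<le> \<bar>c a\<bar> * nrm (f a) + \<bar>1\<bar> * nrm ?S"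
    by (rule nrm_lin_le[OF fa SH])
  also have "\<dots> \<le> \<bar>c a\<bar> * nrm (f a) + (\<Sum>j\<in>J. \<bar>c j\<bar> * nrm (f j))"
    using IH by simp
  also have "\<dots> = (\<Sum>j\<in>insert a J. \<bar>c j\<bar> * nrm (f j))"
    using insert.hyps by (simp add: sum.insert)
  finally show ?case unfolding e1 .
qed

lemma parallelogram: assumes "f \<in> H" "g \<in> H"
  shows "(nrm (\<lambda>x. f x - g x))\<^sup>2 = 2 * (nrm f)\<^sup>2 + 2 * (nrm g)\<^sup>2 - 4 * (nrm (\<lambda>x. (1/2) * f x + (1/2) * g x))\<^sup>2"
proof -
  have e1: "(nrm (\<lambda>x. f x - g x))\<^sup>2 = (nrm f)\<^sup>2 - 2 * ip f g + (nrm g)\<^sup>2"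
    using nrm_lin_sq[OF assms, of 1 "-1"] by simp
  have e2: "(nrm (\<lambda>x. (1/2) * f x + (1/2) * g x))\<^sup>2 = (1/2)\<^sup>2 * (nrm f)\<^sup>2 + 2 * (1/2) * (1/2) * ip f g + (1/2)\<^sup>2 * (nrm g)\<^sup>2"
    by (rule nrm_lin_sq[OF assms])
  show ?thesis unfolding e1 e2 by (simp add: power2_eq_square)
qed

lemma pt_conv: assumes "f \<in> H" "g \<in> H" "(\<lambda>m. nrm (\<lambda>x. s m x - g x)) \<longlonglongrightarrow> 0" "\<forall>m. s m \<in> H"
  shows "(\<lambda>m. s m y) \<longlonglongrightarrow> g y"
proof (cases "y \<in> X")
  case True
  have b: "\<bar>s m y - g y\<bar> \<le> nrm (\<lambda>x. s m x - g x) * sqrt (k y y)" for m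
  proof -
    have "s m \<in> H" using assms(4) by blast
    then have "(\<lambda>x. s m x - g x) \<in> H" by (rule H_diff[OF _ assms(2)])
    from pt_bound[OF this True] show ?thesis by simp
  qed
  have lim0: "(\<lambda>m. nrm (\<lambda>x. s m x - g x) * sqrt (k y y)) \<longlonglongrightarrow> 0"
    using tendsto_mult[OF assms(3) tendsto_const, of "sqrt (k y y)"] by simp
  have ev: "eventually (\<lambda>m. norm (s m y - g y) \<le> nrm (\<lambda>x. s m x - g x) * sqrt (k y y)) sequentially"
    using b by simp
  have "(\<lambda>m. s m y - g y) \<longlonglongrightarrow> 0" by (rule Lim_null_comparison[OF ev lim0])
  then show ?thesis by (simp add: LIM_zero_iff)
next
  case False
  have "s m y = 0" for m using H_out[OF _ False] assms(4) by blast
  moreover have "g y = 0" using H_out[OF assms(2) False] .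
  ultimately show ?thesis by simp
qed

lemma weak_limit:
  fixes \<phi> :: "nat \<Rightarrow> 'a \<Rightarrow> real" and n :: real
  assumes phiH: "\<forall>j. \<phi> j \<in> H" and phin: "\<forall>j. nrm (\<phi> j) \<le> n"
    and conv: "\<forall>y\<in>G. (\<lambda>j. \<phi> j y) \<longlonglongrightarrow> u y"
  shows "\<exists>g\<in>H. nrm g \<le> n \<and> (\<forall>y\<in>G. g y = u y)"
proof -
  define C where "C m = {f. \<exists>J c. finite J \<and> J \<subseteq> {m..} \<and> (\<forall>j\<in>J. 0 \<le> c j) \<and> sum c J = 1 \<and>
       f = (\<lambda>x. \<Sum>j\<in>J. c j * \<phi> j x)}" for m :: nat
  have CH: "f \<in> H" if fC: "f \<in> C m" for f m
  proof -
    obtain J c where J: "finite J" "f = (\<lambda>x. \<Sum>j\<in>J. c j * \<phi> j x)"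
      using fC unfolding C_def by blast
    then show ?thesis using H_sum[of J \<phi> c] phiH by simp
  qed
  have Cn: "nrm f \<le> n" if fC: "f \<in> C m" for f m
  proof -
    obtain J c where J: "finite J" "\<forall>j\<in>J. 0 \<le> c j" "sum c J = 1" "f = (\<lambda>x. \<Sum>j\<in>J. c j * \<phi> j x)"
      using fC unfolding C_def by blast
    have "nrm (\<lambda>x. \<Sum>j\<in>J. c j * \<phi> j x) \<le> (\<Sum>j\<in>J. \<bar>c j\<bar> * nrm (\<phi> j))"
      by (rule nrm_sum_le[OF J(1)]) (simp add: phiH)
    then have "nrm f \<le> (\<Sum>j\<in>J. \<bar>c j\<bar> * nrm (\<phi> j))" using J(4) by simp
    also have "\<dots> \<le> (\<Sum>j\<in>J. c j * n)"
      using J phin by (intro sum_mono) (simp add: mult_left_mono)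
    also have "\<dots> = n" using J by (simp add: sum_distrib_right[symmetric])
    finally show ?thesis .
  qed
  have Cmono: "C l \<subseteq> C m" if "m \<le> l" for m l
    using that unfolding C_def by fastforce
  have Cphi: "\<phi> m \<in> C m" for m
  proof -
    have "\<phi> m = (\<lambda>x. \<Sum>j\<in>{m}. (\<lambda>_. 1::real) j * \<phi> j x)" by simp
    then show ?thesis unfolding C_def by (intro CollectI exI[of _ "{m}"] exI[of _ "\<lambda>_. 1::real"]) auto
  qed
  have Cmid: "(\<lambda>x. (1/2) * f x + (1/2) * g x) \<in> C m" if fC: "f \<in> C m" and gC: "g \<in> C m" for f g m
  proof -
    obtain J1 c1 where J1: "finite J1" "J1 \<subseteq> {m..}" "\<forall>j\<in>J1. 0 \<le> c1 j" "sum c1 J1 = 1" "f = (\<lambda>x. \<Sum>j\<in>J1. c1 j * \<phi> j x)"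
      using fC unfolding C_def by blast
    obtain J2 c2 where J2: "finite J2" "J2 \<subseteq> {m..}" "\<forall>j\<in>J2. 0 \<le> c2 j" "sum c2 J2 = 1" "g = (\<lambda>x. \<Sum>j\<in>J2. c2 j * \<phi> j x)"
      using gC unfolding C_def by blast
    define d1 where "d1 j = (if j \<in> J1 then c1 j else 0)" for j
    define d2 where "d2 j = (if j \<in> J2 then c2 j else 0)" for j
    define c where "c j = (1/2) * d1 j + (1/2) * d2 j" for j
    have fin: "finite (J1 \<union> J2)" using J1 J2 by simp
    have s1: "(\<Sum>j\<in>J1 \<union> J2. d1 j * a j) = (\<Sum>j\<in>J1. c1 j * a j)" for a :: "nat \<Rightarrow> real"
      by (rule sum.mono_neutral_cong_right[OF fin]) (auto simp: d1_def)
    have s2: "(\<Sum>j\<in>J1 \<union> J2. d2 j * a j) = (\<Sum>j\<in>J2. c2 j * a j)" for a :: "nat \<Rightarrow> real"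
      by (rule sum.mono_neutral_cong_right[OF fin]) (auto simp: d2_def)
    have e: "(\<Sum>j\<in>J1 \<union> J2. c j * a j) = (1/2) * (\<Sum>j\<in>J1. c1 j * a j) + (1/2) * (\<Sum>j\<in>J2. c2 j * a j)"
      for a :: "nat \<Rightarrow> real"
      unfolding c_def s1[symmetric] s2[symmetric]
      by (simp add: sum.distrib sum_distrib_left algebra_simps)
    have "sum c (J1 \<union> J2) = 1" using e[of "\<lambda>_. 1"] J1 J2 by simp
    moreover have "(\<lambda>x. (1/2) * f x + (1/2) * g x) = (\<lambda>x. \<Sum>j\<in>J1 \<union> J2. c j * \<phi> j x)"
      using e J1(5) J2(5) by simp
    moreover have "\<forall>j\<in>J1 \<union> J2. 0 \<le> c j" using J1 J2 by (auto simp: c_def d1_def d2_def)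
    ultimately show ?thesis unfolding C_def using fin J1(2) J2(2)
      by (intro CollectI exI[of _ "J1 \<union> J2"] exI[of _ c]) auto
  qed
  have Cpt: "\<bar>f y - u y\<bar> \<le> e" if fC: "f \<in> C m" and hyp: "\<forall>j\<ge>m. \<bar>\<phi> j y - u y\<bar> \<le> e" for f m y e
  proof -
    obtain J c where J: "finite J" "J \<subseteq> {m..}" "\<forall>j\<in>J. 0 \<le> c j" "sum c J = 1" "f = (\<lambda>x. \<Sum>j\<in>J. c j * \<phi> j x)"
      using fC unfolding C_def by blast
    have "f y - u y = (\<Sum>j\<in>J. c j * (\<phi> j y - u y))"
      using J by (simp add: right_diff_distrib sum_subtractf sum_distrib_right[symmetric])
    also have "\<bar>\<dots>\<bar> \<le> (\<Sum>j\<in>J. \<bar>c j * (\<phi> j y - u y)\<bar>)" by (rule sum_abs)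
    also have "\<dots> \<le> (\<Sum>j\<in>J. c j * e)"
      using J hyp by (intro sum_mono) (auto simp: abs_mult intro!: mult_left_mono)
    also have "\<dots> = e" using J by (simp add: sum_distrib_right[symmetric])
    finally show ?thesis .
  qed
  define d where "d m = Inf (nrm ` C m)" for m
  have bdd: "bdd_below (nrm ` C m)" for m
    using CH nrm_nonneg by (intro bdd_belowI[of _ 0]) auto
  have ne: "nrm ` C m \<noteq> {}" for m using Cphi by blast
  have d_le: "d m \<le> nrm f" if "f \<in> C m" for f m
    unfolding d_def using bdd that by (intro cInf_lower) auto
  have d_nonneg: "0 \<le> d m" for m
    unfolding d_def using ne CH nrm_nonneg by (intro cInf_greatest) auto
  have d_n: "d m \<le> n" for m using d_le[OF Cphi] phin order_trans by blast
  have d_mono: "mono d"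
    unfolding mono_def d_def
    by (intro allI impI cInf_superset_mono[OF ne bdd image_mono[OF Cmono]])
  have "\<exists>g. g \<in> C m \<and> (nrm g)\<^sup>2 < (d m)\<^sup>2 + 1 / (real m + 1)" for m
  proof -
    have "d m < sqrt ((d m)\<^sup>2 + 1 / (real m + 1))"
      using d_nonneg[of m] by (simp add: real_less_rsqrt)
    then obtain v where v: "v \<in> nrm ` C m" "v < sqrt ((d m)\<^sup>2 + 1 / (real m + 1))"
      using cInf_lessD[OF ne] unfolding d_def by blast
    then obtain g where g: "g \<in> C m" "nrm g < sqrt ((d m)\<^sup>2 + 1 / (real m + 1))" by blast
    have "(nrm g)\<^sup>2 < (sqrt ((d m)\<^sup>2 + 1 / (real m + 1)))\<^sup>2"
      using g(2) nrm_nonneg[OF CH[OF g(1)]] by (intro power_strict_mono) auto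
    also have "\<dots> = (d m)\<^sup>2 + 1 / (real m + 1)" by (simp add: add_nonneg_nonneg)
    finally show ?thesis using g by blast
  qed
  then obtain gs where gs: "\<And>m. gs m \<in> C m" "\<And>m. (nrm (gs m))\<^sup>2 < (d m)\<^sup>2 + 1 / (real m + 1)"
    by metis
  have gsH: "gs m \<in> H" for m using CH gs by blast
  define D where "D = Sup (range d)"
  have bdd_d: "bdd_above (range d)" using d_n by (intro bdd_aboveI[of _ n]) auto
  have dD: "d m \<le> D" for m unfolding D_def using bdd_d by (intro cSup_upper) auto
  have d_lim: "d \<longlonglongrightarrow> D" unfolding D_def
    using d_mono bdd_d by (intro LIMSEQ_incseq_SUP) (auto simp: incseq_def mono_def)
  have q: "(\<lambda>m. 4 / (real m + 1)) \<longlonglongrightarrow> 0"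
    using LIMSEQ_Suc[OF lim_const_over_n[of 4]] by (simp add: add.commute)
  have sq_lim: "(\<lambda>m. 2 * (D\<^sup>2 - (d m)\<^sup>2) + 4 / (real m + 1)) \<longlonglongrightarrow> 2 * (D\<^sup>2 - D\<^sup>2) + 0"
    using q by (intro tendsto_intros d_lim)
  have gs_cauchy: "(nrm (\<lambda>x. gs m x - gs l x))\<^sup>2 \<le> 2 * (D\<^sup>2 - (d m)\<^sup>2) + 4 / (real m + 1)" if "m \<le> l" for m l
  proof -
    have mid: "(\<lambda>x. (1/2) * gs m x + (1/2) * gs l x) \<in> C m"
      using Cmid gs(1) Cmono[OF that] by blast
    have "d m \<le> nrm (\<lambda>x. (1/2) * gs m x + (1/2) * gs l x)" by (rule d_le[OF mid])
    then have m2: "(d m)\<^sup>2 \<le> (nrm (\<lambda>x. (1/2) * gs m x + (1/2) * gs l x))\<^sup>2"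
      using d_nonneg by (intro power_mono) auto
    have dl: "(d l)\<^sup>2 \<le> D\<^sup>2" using dD[of l] d_nonneg[of l] by (intro power_mono) auto
    have ql: "1 / (real l + 1) \<le> 1 / (real m + 1)" using that by (intro divide_left_mono) auto
    have "2 * (nrm (gs m))\<^sup>2 + 2 * (nrm (gs l))\<^sup>2 - 4 * (nrm (\<lambda>x. (1/2) * gs m x + (1/2) * gs l x))\<^sup>2
       \<le> 2 * (D\<^sup>2 - (d m)\<^sup>2) + 4 * (1 / (real m + 1))"
      by (rule aux_ineq[OF gs(2)[of m] gs(2)[of l] m2 dl ql])
    then show ?thesis unfolding parallelogram[OF gsH gsH] by simp
  qed
  have cauchy: "\<forall>e>0. \<exists>N. \<forall>m\<ge>N. \<forall>l\<ge>N. hnorm ip (\<lambda>x. gs m x - gs l x) < e"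
  proof (intro allI impI)
    fix e :: real assume e: "e > 0"
    then have "e\<^sup>2 > 0" by simp
    from LIMSEQ_D[OF sq_lim this] obtain N where
      N0: "\<forall>m\<ge>N. norm (2 * (D\<^sup>2 - (d m)\<^sup>2) + 4 / (real m + 1) - (2 * (D\<^sup>2 - D\<^sup>2) + 0)) < e\<^sup>2" by blast
    have N: "\<bar>2 * (D\<^sup>2 - (d m)\<^sup>2) + 4 / (real m + 1)\<bar> < e\<^sup>2" if "m \<ge> N" for m
      using N0 that by simp
    have *: "nrm (\<lambda>x. gs m x - gs l x) < e" if "N \<le> m" "m \<le> l" for m l
    proof -
      have "(nrm (\<lambda>x. gs m x - gs l x))\<^sup>2 < e\<^sup>2"
        using gs_cauchy[OF that(2)] N[OF that(1)] by simp
      then show ?thesis using e by (simp add: power_less_imp_less_base)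
    qed
    show "\<exists>N. \<forall>m\<ge>N. \<forall>l\<ge>N. hnorm ip (\<lambda>x. gs m x - gs l x) < e"
    proof (intro exI allI impI)
      fix m l assume "N \<le> m" "N \<le> l"
      then show "hnorm ip (\<lambda>x. gs m x - gs l x) < e"
        using *[of m l] *[of l m] nrm_diff_sym[OF gsH gsH] unfolding nrm_def
        by (cases "m \<le> l") auto
    qed
  qed
  obtain g where g: "g \<in> H" "(\<lambda>m. hnorm ip (\<lambda>x. gs m x - g x)) \<longlonglongrightarrow> 0"
    using H_complete[OF gsH cauchy] by blast
  have gl: "(\<lambda>m. nrm (\<lambda>x. gs m x - g x)) \<longlonglongrightarrow> 0" using g(2) unfolding nrm_def .
  have "nrm g \<le> n"
  proof -
    have le: "nrm g \<le> n + nrm (\<lambda>x. gs m x - g x)" for m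
    proof -
      have "nrm (\<lambda>x. 1 * gs m x + (-1) * (\<lambda>x. gs m x - g x) x) \<le> \<bar>1\<bar> * nrm (gs m) + \<bar>-1\<bar> * nrm (\<lambda>x. gs m x - g x)"
        by (rule nrm_lin_le[OF gsH H_diff[OF gsH g(1)]])
      then show ?thesis using Cn[OF gs(1)[of m]] by simp
    qed
    have "(\<lambda>m. n + nrm (\<lambda>x. gs m x - g x)) \<longlonglongrightarrow> n + 0" by (intro tendsto_intros gl)
    then show ?thesis using le by (intro LIMSEQ_le_const[of "\<lambda>m. n + nrm (\<lambda>x. gs m x - g x)"]) auto
  qed
  moreover have "g y = u y" if y: "y \<in> G" for y
  proof -
    have l1: "(\<lambda>m. gs m y) \<longlonglongrightarrow> g y" by (rule pt_conv[OF gsH g(1) gl]) (simp add: gsH)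
    have l2: "(\<lambda>m. gs m y) \<longlonglongrightarrow> u y"
    proof (rule LIMSEQ_I)
      fix r :: real assume r: "r > 0"
      then have "r / 2 > 0" by simp
      then obtain N where N: "\<And>j. j \<ge> N \<Longrightarrow> norm (\<phi> j y - u y) < r / 2"
        using conv y unfolding LIMSEQ_def dist_real_def by fastforce
      show "\<exists>N. \<forall>m\<ge>N. norm (gs m y - u y) < r"
      proof (intro exI allI impI)
        fix m assume "N \<le> m"
        then have "\<forall>j\<ge>m. \<bar>\<phi> j y - u y\<bar> \<le> r / 2" using N by (auto intro: less_imp_le)
        then have "\<bar>gs m y - u y\<bar> \<le> r / 2" by (rule Cpt[OF gs(1)])
        then show "norm (gs m y - u y) < r" using r by simp
      qed
    qed
    show ?thesis using LIMSEQ_unique[OF l1 l2] .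
  qed
  ultimately show ?thesis using g(1) by blast
qed

end

locale mk = rkh X k H ip for X :: "'a::metric_space set" and k H ip +
  fixes \<mu> :: "'a measure" and R :: "'a \<Rightarrow> 'a measure"
  assumes prob: "prob_space \<mu>" and sp: "space \<mu> = X" and st: "sets \<mu> = sets (restrict_space borel X)"
    and Rk: "R \<in> \<mu> \<rightarrow>\<^sub>M prob_algebra \<mu>" and inv: "bind \<mu> R = \<mu>"
    and kc: "continuous_on (X \<times> X) (\<lambda>(x, y). k x y)"
    and A1: "(\<lambda>x. k x x) \<in> L2 \<mu>"
    and A2: "\<And>\<psi>. \<psi> \<in> L2 \<mu> \<Longrightarrow> (\<integral>x. (\<integral>y. k x y * \<psi> x * \<psi> y \<partial>\<mu>) \<partial>\<mu>) = 0 \<Longrightarrow> (AE x in \<mu>. \<psi> x = 0)"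
    and A3: "\<And>\<psi>. \<psi> \<in> H \<Longrightarrow> (AE x in \<mu>. \<psi> x = 0) \<Longrightarrow> \<psi> = (\<lambda>x. 0)"
begin

lemma kdiag_cont: "continuous_on X (\<lambda>y. k y y)"
proof -
  have "continuous_on X (\<lambda>y. (\<lambda>(x, y). k x y) (y, y))"
    by (rule continuous_on_compose2[OF kc]) (auto intro: continuous_intros)
  then show ?thesis by simp
qed

lemma krow_cont: "continuous_on X (\<lambda>y. k x y)" if "x \<in> X"
proof -
  have "continuous_on X (\<lambda>y. (\<lambda>(x, y). k x y) (x, y))"
    by (rule continuous_on_compose2[OF kc]) (use that in \<open>auto intro: continuous_intros\<close>)
  then show ?thesis by simp
qed

lemma feat_diff_sq: assumes "x \<in> X" "y \<in> X"
  shows "(nrm (\<lambda>z. feat X k y z - feat X k x z))\<^sup>2 = k y y - 2 * k x y + k x x"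
proof -
  have "(nrm (\<lambda>z. 1 * feat X k y z + (-1) * feat X k x z))\<^sup>2
     = 1\<^sup>2 * (nrm (feat X k y))\<^sup>2 + 2 * 1 * (-1) * ip (feat X k y) (feat X k x) + (-1)\<^sup>2 * (nrm (feat X k x))\<^sup>2"
    by (rule nrm_lin_sq[OF feat_H[OF assms(2)] feat_H[OF assms(1)]])
  then show ?thesis
    using assms by (simp add: nrm_sq feat_H feat_ip k_sym[of y x])
qed

lemma H_cont: assumes f: "f \<in> H" shows "continuous_on X f"
  unfolding continuous_on_def
proof (intro ballI)
  fix x assume x: "x \<in> X"
  define q where "q y = k y y - 2 * k x y + k x x" for y
  have qc: "continuous_on X q" unfolding q_def
    by (intro continuous_intros kdiag_cont krow_cont x)
  have "(q \<longlongrightarrow> q x) (at x within X)" using qc x unfolding continuous_on_def by blast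
  moreover have "q x = 0" unfolding q_def by simp
  ultimately have "((\<lambda>y. nrm f * sqrt (q y)) \<longlongrightarrow> nrm f * sqrt 0) (at x within X)"
    by (intro tendsto_intros) auto
  then have l0: "((\<lambda>y. nrm f * sqrt (q y)) \<longlongrightarrow> 0) (at x within X)" by simp
  have b: "norm (f y - f x) \<le> nrm f * sqrt (q y)" if y: "y \<in> X" for y
  proof -
    have fd: "(\<lambda>z. feat X k y z - feat X k x z) \<in> H" using H_diff feat_H x y by blast
    have "f y - f x = ip f (\<lambda>z. feat X k y z - feat X k x z)"
      using ip_diff_r[OF feat_H[OF y] feat_H[OF x] f] repr[OF x f] repr[OF y f] by simp
    then have "norm (f y - f x) \<le> nrm f * nrm (\<lambda>z. feat X k y z - feat X k x z)"
      using cs_nrm[OF f fd] by simp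
    also have "nrm (\<lambda>z. feat X k y z - feat X k x z) = sqrt (q y)"
      using feat_diff_sq[OF x y] nrm_nonneg[OF fd] unfolding q_def
      by (metis real_sqrt_unique)
    finally show ?thesis .
  qed
  have ev: "eventually (\<lambda>y. norm (f y - f x) \<le> nrm f * sqrt (q y)) (at x within X)"
    using b by (auto simp: eventually_at_filter)
  have "((\<lambda>y. f y - f x) \<longlongrightarrow> 0) (at x within X)" by (rule Lim_null_comparison[OF ev l0])
  then show "(f \<longlongrightarrow> f x) (at x within X)" by (simp add: LIM_zero_iff)
qed

lemma H_meas: "f \<in> H \<Longrightarrow> f \<in> borel_measurable \<mu>"
  using borel_measurable_continuous_on_restrict[OF H_cont] measurable_cong_sets[OF st refl] by blast

lemma R_sub: "R \<in> \<mu> \<rightarrow>\<^sub>M subprob_algebra \<mu>" by (rule measurable_prob_algebraD[OF Rk])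

lemma R_sp: assumes "y \<in> X" shows "prob_space (R y)" "sets (R y) = sets \<mu>" "space (R y) = X"
proof -
  have "R y \<in> space (prob_algebra \<mu>)" using measurable_space[OF Rk] assms sp by blast
  then show P: "prob_space (R y)" and S: "sets (R y) = sets \<mu>" by (auto simp: space_prob_algebra)
  show "space (R y) = X" using sets_eq_imp_space_eq[OF S] sp by simp
qed

lemma meas_R: assumes "f \<in> borel_measurable \<mu>" "y \<in> X" shows "f \<in> borel_measurable (R y)"
  unfolding measurable_cong_sets[OF R_sp(2)[OF assms(2)] refl, of borel] by (rule assms(1))

lemma kk_meas: "(\<lambda>x. k x x) \<in> borel_measurable \<mu>" using A1 by (simp add: L2_def)

lemma kk_int: "integrable \<mu> (\<lambda>x. k x x)"
proof -
  interpret P: prob_space \<mu> by (rule prob)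
  have "integrable \<mu> (\<lambda>x. (k x x)\<^sup>2)" using A1 by (simp add: L2_def)
  then show ?thesis by (rule P.square_integrable_imp_integrable[OF kk_meas])
qed

definition Gd where "Gd = {y \<in> X. integrable (R y) (\<lambda>z. k z z)}"

lemma AE_Gd: "AE y in \<mu>. y \<in> Gd"
proof -
  have m: "(\<lambda>z. ennreal (k z z)) \<in> borel_measurable \<mu>" using kk_meas by measurable
  have mR: "(\<lambda>y. \<integral>\<^sup>+ z. ennreal (k z z) \<partial>R y) \<in> borel_measurable \<mu>"
    by (rule measurable_compose[OF R_sub nn_integral_measurable_subprob_algebra[OF m]])
  have "(\<integral>\<^sup>+ y. (\<integral>\<^sup>+ z. ennreal (k z z) \<partial>R y) \<partial>\<mu>) = (\<integral>\<^sup>+ z. ennreal (k z z) \<partial>(bind \<mu> R))"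
    by (rule nn_integral_bind[OF m R_sub, symmetric])
  also have "\<dots> = (\<integral>\<^sup>+ z. ennreal (k z z) \<partial>\<mu>)" by (simp add: inv)
  also have "\<dots> = ennreal (\<integral> z. k z z \<partial>\<mu>)"
    by (rule nn_integral_eq_integral[OF kk_int]) (auto simp: sp k_diag_nonneg)
  finally have "(\<integral>\<^sup>+ y. (\<integral>\<^sup>+ z. ennreal (k z z) \<partial>R y) \<partial>\<mu>) \<noteq> \<infinity>" by simp
  from nn_integral_PInf_AE[OF mR this]
  show ?thesis
  proof (rule AE_mp, intro AE_I2 impI)
    fix y assume y: "y \<in> space \<mu>" and fin: "(\<integral>\<^sup>+ z. ennreal (k z z) \<partial>R y) \<noteq> \<infinity>"
    have yX: "y \<in> X" using y sp by simp
    have "(\<integral>\<^sup>+ z. ennreal (norm (k z z)) \<partial>R y) = (\<integral>\<^sup>+ z. ennreal (k z z) \<partial>R y)"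
      by (rule nn_integral_cong) (simp add: R_sp(3)[OF yX] k_diag_nonneg)
    then have "integrable (R y) (\<lambda>z. k z z)"
      using fin meas_R[OF kk_meas yX] by (intro integrableI_bounded) (auto simp: less_top)
    then show "y \<in> Gd" using yX by (simp add: Gd_def)
  qed
qed

definition q where "q y = (\<integral> z. k z z \<partial>R y)"

lemma q_meas: "q \<in> borel_measurable \<mu>"
  unfolding q_def by (rule measurable_compose[OF R_sub integral_measurable_subprob_algebra[OF kk_meas]])

lemma q_nonneg: "y \<in> X \<Longrightarrow> 0 \<le> q y"
  unfolding q_def by (intro integral_nonneg_AE AE_I2) (simp add: R_sp(3) k_diag_nonneg)

lemma q_int: "integrable \<mu> q"
proof -
  have m: "(\<lambda>z. ennreal (k z z)) \<in> borel_measurable \<mu>" using kk_meas by measurable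
  have e: "AE y in \<mu>. ennreal (norm (q y)) = (\<integral>\<^sup>+ z. ennreal (k z z) \<partial>R y)"
    using AE_Gd
  proof (rule AE_mp, intro AE_I2 impI)
    fix y assume "y \<in> Gd"
    then have yX: "y \<in> X" and ig: "integrable (R y) (\<lambda>z. k z z)" by (auto simp: Gd_def)
    have "(\<integral>\<^sup>+ z. ennreal (k z z) \<partial>R y) = ennreal (q y)" unfolding q_def
      by (rule nn_integral_eq_integral[OF ig]) (intro AE_I2, simp add: R_sp(3)[OF yX] k_diag_nonneg)
    then show "ennreal (norm (q y)) = (\<integral>\<^sup>+ z. ennreal (k z z) \<partial>R y)"
      using q_nonneg[OF yX] by simp
  qed
  have "(\<integral>\<^sup>+ y. ennreal (norm (q y)) \<partial>\<mu>) = (\<integral>\<^sup>+ y. (\<integral>\<^sup>+ z. ennreal (k z z) \<partial>R y) \<partial>\<mu>)"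
    by (rule nn_integral_cong_AE[OF e])
  also have "\<dots> = (\<integral>\<^sup>+ z. ennreal (k z z) \<partial>(bind \<mu> R))"
    by (rule nn_integral_bind[OF m R_sub, symmetric])
  also have "\<dots> = (\<integral>\<^sup>+ z. ennreal (k z z) \<partial>\<mu>)" by (simp add: inv)
  also have "\<dots> = ennreal (\<integral> z. k z z \<partial>\<mu>)"
    by (rule nn_integral_eq_integral[OF kk_int]) (auto simp: sp k_diag_nonneg)
  finally show ?thesis using q_meas by (intro integrableI_bounded) (auto simp: less_top[symmetric])
qed

lemma H_sq_R: assumes f: "f \<in> H" and y: "y \<in> Gd"
  shows "integrable (R y) (\<lambda>z. (f z)\<^sup>2)" "integrable (R y) f"
    "(koopman R f y)\<^sup>2 \<le> (nrm f)\<^sup>2 * q y"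
proof -
  have yX: "y \<in> X" and ig: "integrable (R y) (\<lambda>z. k z z)" using y by (auto simp: Gd_def)
  interpret P: prob_space "R y" by (rule R_sp(1)[OF yX])
  have fm: "f \<in> borel_measurable (R y)" by (rule meas_R[OF H_meas[OF f] yX])
  have b: "(f z)\<^sup>2 \<le> (nrm f)\<^sup>2 * k z z" if "z \<in> space (R y)" for z
    using pt_bound_sq[OF f] that R_sp(3)[OF yX] by simp
  show i2: "integrable (R y) (\<lambda>z. (f z)\<^sup>2)"
  proof (rule Bochner_Integration.integrable_bound[of _ "\<lambda>z. (nrm f)\<^sup>2 * k z z"])
    show "integrable (R y) (\<lambda>z. (nrm f)\<^sup>2 * k z z)" using ig by simp
    show "(\<lambda>z. (f z)\<^sup>2) \<in> borel_measurable (R y)" using fm by measurable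
    show "AE z in R y. norm ((f z)\<^sup>2) \<le> norm ((nrm f)\<^sup>2 * k z z)"
      using b R_sp(3)[OF yX] by (intro AE_I2) (auto simp: k_diag_nonneg)
  qed
  show i1: "integrable (R y) f" by (rule P.square_integrable_imp_integrable[OF fm i2])
  have "0 \<le> P.variance f" by (intro integral_nonneg_AE AE_I2) simp
  then have "(koopman R f y)\<^sup>2 \<le> (\<integral> z. (f z)\<^sup>2 \<partial>R y)"
    unfolding koopman_def using P.variance_eq[OF i1 i2] by simp
  also have "\<dots> \<le> (\<integral> z. (nrm f)\<^sup>2 * k z z \<partial>R y)"
    by (rule integral_mono[OF i2]) (use ig b in auto)
  also have "\<dots> = (nrm f)\<^sup>2 * q y" unfolding q_def by simp
  finally show "(koopman R f y)\<^sup>2 \<le> (nrm f)\<^sup>2 * q y" .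
qed

lemma K_meas: "f \<in> H \<Longrightarrow> koopman R f \<in> borel_measurable \<mu>"
  unfolding koopman_def by (rule measurable_compose[OF R_sub integral_measurable_subprob_algebra[OF H_meas]])

lemma K_lin: assumes "y \<in> Gd" "f \<in> H" "g \<in> H"
  shows "koopman R (\<lambda>x. a * f x + b * g x) y = a * koopman R f y + b * koopman R g y"
  unfolding koopman_def using H_sq_R(2)[OF assms(2,1)] H_sq_R(2)[OF assms(3,1)]
  by (simp add: integral_add integral_mult_right)


lemma H_L2: assumes f: "f \<in> H" shows "f \<in> L2 \<mu>"
proof -
  have "integrable \<mu> (\<lambda>z. (f z)\<^sup>2)"
  proof (rule Bochner_Integration.integrable_bound[of _ "\<lambda>z. (nrm f)\<^sup>2 * k z z"])
    show "integrable \<mu> (\<lambda>z. (nrm f)\<^sup>2 * k z z)" using kk_int by simp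
    show "(\<lambda>z. (f z)\<^sup>2) \<in> borel_measurable \<mu>" using H_meas[OF f] by measurable
    show "AE z in \<mu>. norm ((f z)\<^sup>2) \<le> norm ((nrm f)\<^sup>2 * k z z)"
      using pt_bound_sq[OF f] by (intro AE_I2) (auto simp: sp k_diag_nonneg)
  qed
  then show ?thesis using H_meas[OF f] by (simp add: L2_def)
qed

lemma K_L2: assumes f: "f \<in> H" shows "koopman R f \<in> L2 \<mu>"
proof -
  have "integrable \<mu> (\<lambda>z. (koopman R f z)\<^sup>2)"
  proof (rule Bochner_Integration.integrable_bound[of _ "\<lambda>z. (nrm f)\<^sup>2 * q z"])
    show "integrable \<mu> (\<lambda>z. (nrm f)\<^sup>2 * q z)" using q_int by simp
    show "(\<lambda>z. (koopman R f z)\<^sup>2) \<in> borel_measurable \<mu>" using K_meas[OF f] by measurable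
    show "AE z in \<mu>. norm ((koopman R f z)\<^sup>2) \<le> norm ((nrm f)\<^sup>2 * q z)"
      using AE_Gd
    proof (rule AE_mp, intro AE_I2 impI)
      fix z assume "z \<in> Gd"
      then show "norm ((koopman R f z)\<^sup>2) \<le> norm ((nrm f)\<^sup>2 * q z)"
        using H_sq_R(3)[OF f] q_nonneg[of z] by (auto simp: Gd_def)
    qed
  qed
  then show ?thesis using K_meas[OF f] by (simp add: L2_def)
qed

lemma L2_diff: assumes "u \<in> L2 \<mu>" "v \<in> L2 \<mu>" shows "(\<lambda>x. u x - v x) \<in> L2 \<mu>"
proof -
  have m: "u \<in> borel_measurable \<mu>" "v \<in> borel_measurable \<mu>" using assms by (auto simp: L2_def)
  have "integrable \<mu> (\<lambda>z. (u z - v z)\<^sup>2)"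
  proof (rule Bochner_Integration.integrable_bound[of _ "\<lambda>z. 2 * (u z)\<^sup>2 + 2 * (v z)\<^sup>2"])
    show "integrable \<mu> (\<lambda>z. 2 * (u z)\<^sup>2 + 2 * (v z)\<^sup>2)" using assms by (auto simp: L2_def)
    show "(\<lambda>z. (u z - v z)\<^sup>2) \<in> borel_measurable \<mu>" using m by measurable
    have "(a - b)\<^sup>2 \<le> 2 * a\<^sup>2 + 2 * b\<^sup>2" for a b :: real
      using sum_squares_ge_zero[of "a + b" 0] by (simp add: power2_eq_square algebra_simps)
    then show "AE z in \<mu>. norm ((u z - v z)\<^sup>2) \<le> norm (2 * (u z)\<^sup>2 + 2 * (v z)\<^sup>2)"
      by (intro AE_I2) simp
  qed
  then show ?thesis using m by (simp add: L2_def)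
qed

lemma kcol_meas: assumes x: "x \<in> X" shows "(\<lambda>y. k y x) \<in> borel_measurable \<mu>"
proof -
  have "feat X k x \<in> borel_measurable \<mu>" by (rule H_meas[OF feat_H[OF x]])
  then show ?thesis
    by (rule measurable_cong[THEN iffD1, rotated]) (simp add: feat_def sp k_sym[OF x])
qed

lemma k_off: assumes "x \<in> X" "y \<in> X" shows "\<bar>k y x\<bar> \<le> sqrt (k y y) * sqrt (k x x)"
  using cs_nrm[OF feat_H[OF assms(2)] feat_H[OF assms(1)]] assms by (simp add: feat_ip nrm_feat)

lemma L2_k_int: assumes u: "u \<in> L2 \<mu>" and x: "x \<in> X" shows "integrable \<mu> (\<lambda>y. u y * k y x)"
proof (rule Bochner_Integration.integrable_bound[of _ "\<lambda>y. sqrt (k x x) * ((u y)\<^sup>2 + k y y)"])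
  show "integrable \<mu> (\<lambda>y. sqrt (k x x) * ((u y)\<^sup>2 + k y y))" using u kk_int by (auto simp: L2_def)
  show "(\<lambda>y. u y * k y x) \<in> borel_measurable \<mu>" using u kcol_meas[OF x] by (auto simp: L2_def)
  show "AE y in \<mu>. norm (u y * k y x) \<le> norm (sqrt (k x x) * ((u y)\<^sup>2 + k y y))"
  proof (intro AE_I2)
    fix y assume "y \<in> space \<mu>"
    then have y: "y \<in> X" using sp by simp
    have kx: "0 \<le> sqrt (k x x)" using k_diag_nonneg[OF x] by simp
    have ky: "0 \<le> k y y" using k_diag_nonneg[OF y] .
    have am: "\<bar>u y\<bar> * sqrt (k y y) \<le> (u y)\<^sup>2 + k y y"
    proof -
      have "0 \<le> (\<bar>u y\<bar> - sqrt (k y y))\<^sup>2" by simp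
      then have "2 * (\<bar>u y\<bar> * sqrt (k y y)) \<le> (u y)\<^sup>2 + k y y"
        using ky by (simp add: power2_eq_square algebra_simps)
      moreover have "0 \<le> \<bar>u y\<bar> * sqrt (k y y)" using ky by simp
      ultimately show ?thesis by linarith
    qed
    have "norm (u y * k y x) = \<bar>u y\<bar> * \<bar>k y x\<bar>" by (simp add: abs_mult)
    also have "\<dots> \<le> \<bar>u y\<bar> * (sqrt (k y y) * sqrt (k x x))"
      by (intro mult_left_mono k_off[OF x y]) simp
    also have "\<dots> = sqrt (k x x) * (\<bar>u y\<bar> * sqrt (k y y))" by simp
    also have "\<dots> \<le> sqrt (k x x) * ((u y)\<^sup>2 + k y y)" by (intro mult_left_mono am kx)
    also have "\<dots> \<le> norm (sqrt (k x x) * ((u y)\<^sup>2 + k y y))" by simp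
    finally show "norm (u y * k y x) \<le> norm (sqrt (k x x) * ((u y)\<^sup>2 + k y y))" .
  qed
qed

lemma Eop_diff: assumes "u \<in> L2 \<mu>" "v \<in> L2 \<mu>"
  shows "Eop \<mu> k (\<lambda>y. u y - v y) x = Eop \<mu> k u x - Eop \<mu> k v x"
proof (cases "x \<in> X")
  case True
  have "(\<integral>y. (u y - v y) * k y x \<partial>\<mu>) = (\<integral>y. u y * k y x - v y * k y x \<partial>\<mu>)"
    by (simp add: left_diff_distrib)
  also have "\<dots> = (\<integral>y. u y * k y x \<partial>\<mu>) - (\<integral>y. v y * k y x \<partial>\<mu>)"
    by (rule Bochner_Integration.integral_diff[OF L2_k_int[OF assms(1) True] L2_k_int[OF assms(2) True]])
  finally show ?thesis unfolding Eop_def using True sp by simp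
next
  case False
  then show ?thesis unfolding Eop_def using sp by simp
qed

lemma Eop_cong: assumes "u \<in> borel_measurable \<mu>" "v \<in> borel_measurable \<mu>" "AE y in \<mu>. u y = v y"
  shows "Eop \<mu> k u = Eop \<mu> k v"
proof
  fix x show "Eop \<mu> k u x = Eop \<mu> k v x"
  proof (cases "x \<in> X")
    case True
    have "(\<integral>y. u y * k y x \<partial>\<mu>) = (\<integral>y. v y * k y x \<partial>\<mu>)"
      using assms kcol_meas[OF True] by (intro integral_cong_AE) auto
    then show ?thesis unfolding Eop_def by simp
  next
    case False
    then show ?thesis unfolding Eop_def using sp by simp
  qed
qed

lemma Einj: assumes u: "u \<in> L2 \<mu>" and z: "\<forall>x\<in>X. Eop \<mu> k u x = 0" shows "AE y in \<mu>. u y = 0"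
proof (rule A2[OF u])
  have "(\<integral>y. k x y * u x * u y \<partial>\<mu>) = 0" if x: "x \<in> space \<mu>" for x
  proof -
    have xX: "x \<in> X" using x sp by simp
    have "(\<integral>y. k x y * u x * u y \<partial>\<mu>) = (\<integral>y. u x * (u y * k y x) \<partial>\<mu>)"
      by (rule Bochner_Integration.integral_cong[OF refl]) (simp add: sp k_sym[OF xX])
    also have "\<dots> = u x * (\<integral>y. u y * k y x \<partial>\<mu>)" by simp
    also have "(\<integral>y. u y * k y x \<partial>\<mu>) = Eop \<mu> k u x" unfolding Eop_def using x by simp
    also have "\<dots> = 0" using z xX by simp
    finally show ?thesis by simp
  qed
  then have "(\<integral>x. (\<integral>y. k x y * u x * u y \<partial>\<mu>) \<partial>\<mu>) = (\<integral>x. 0 \<partial>\<mu>)"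
    by (intro Bochner_Integration.integral_cong) auto
  then show "(\<integral>x. (\<integral>y. k x y * u x * u y \<partial>\<mu>) \<partial>\<mu>) = 0" by simp
qed

lemma KEY: assumes psi: "\<psi> \<in> H" and phi: "\<phi> \<in> H"
  shows "CH \<mu> k \<phi> = CHt \<mu> k R \<psi> \<longleftrightarrow> (AE y in \<mu>. koopman R \<psi> y = \<phi> y)"
proof
  assume "AE y in \<mu>. koopman R \<psi> y = \<phi> y"
  then show "CH \<mu> k \<phi> = CHt \<mu> k R \<psi>" unfolding CH_def CHt_def
    by (intro Eop_cong H_meas[OF phi] K_meas[OF psi]) (auto elim: AE_mp)
next
  assume e: "CH \<mu> k \<phi> = CHt \<mu> k R \<psi>"
  have l: "(\<lambda>y. \<phi> y - koopman R \<psi> y) \<in> L2 \<mu>" by (rule L2_diff[OF H_L2[OF phi] K_L2[OF psi]])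
  have "\<forall>x\<in>X. Eop \<mu> k (\<lambda>y. \<phi> y - koopman R \<psi> y) x = 0"
    using e unfolding CH_def CHt_def Eop_diff[OF H_L2[OF phi] K_L2[OF psi]] by simp
  from Einj[OF l this] show "AE y in \<mu>. koopman R \<psi> y = \<phi> y" by (auto elim: AE_mp)
qed

lemma UNIQ: assumes "\<phi>1 \<in> H" "\<phi>2 \<in> H" "AE y in \<mu>. g y = \<phi>1 y" "AE y in \<mu>. g y = \<phi>2 y"
  shows "\<phi>1 = \<phi>2"
proof -
  have d: "(\<lambda>x. \<phi>1 x - \<phi>2 x) \<in> H" using H_diff assms by blast
  have "AE y in \<mu>. \<phi>1 y - \<phi>2 y = 0" using assms(3,4) by eventually_elim simp
  then have "(\<lambda>x. \<phi>1 x - \<phi>2 x) = (\<lambda>x. 0)" using A3[OF d] by simp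
  then show ?thesis by (metis (no_types) eq_iff_diff_eq_0 ext)
qed


end

context mk begin

lemma T_props: assumes iii: "CHt \<mu> k R ` H \<subseteq> CH \<mu> k ` H" and psi: "\<psi> \<in> H"
  shows "KH \<mu> k H R \<psi> \<in> H" "AE y in \<mu>. koopman R \<psi> y = KH \<mu> k H R \<psi> y"
proof -
  obtain \<phi> where phi: "\<phi> \<in> H" "CHt \<mu> k R \<psi> = CH \<mu> k \<phi>" using iii psi by blast
  have ex1: "\<exists>!\<phi>. \<phi> \<in> H \<and> CH \<mu> k \<phi> = CHt \<mu> k R \<psi>"
  proof (rule ex1I[of _ \<phi>])
    show "\<phi> \<in> H \<and> CH \<mu> k \<phi> = CHt \<mu> k R \<psi>" using phi by simp
    fix \<phi>' assume a: "\<phi>' \<in> H \<and> CH \<mu> k \<phi>' = CHt \<mu> k R \<psi>"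
    have "AE y in \<mu>. koopman R \<psi> y = \<phi>' y" using KEY[OF psi] a by blast
    moreover have "AE y in \<mu>. koopman R \<psi> y = \<phi> y" using KEY[OF psi phi(1)] phi(2) by simp
    ultimately show "\<phi>' = \<phi>" using UNIQ a phi(1) by blast
  qed
  have t: "KH \<mu> k H R \<psi> \<in> H \<and> CH \<mu> k (KH \<mu> k H R \<psi>) = CHt \<mu> k R \<psi>"
    unfolding KH_def by (rule theI'[OF ex1])
  then show "KH \<mu> k H R \<psi> \<in> H" by simp
  show "AE y in \<mu>. koopman R \<psi> y = KH \<mu> k H R \<psi> y" using KEY[OF psi] t by blast
qed

lemma bound: assumes iii: "CHt \<mu> k R ` H \<subseteq> CH \<mu> k ` H"
  shows "\<exists>B. \<forall>\<psi>\<in>H. nrm (KH \<mu> k H R \<psi>) \<le> B * nrm \<psi>"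
proof (rule bounded_by_baire)
  let ?T = "KH \<mu> k H R"
  show TH: "\<forall>\<psi>\<in>H. ?T \<psi> \<in> H" using T_props(1)[OF iii] by blast
  show "\<forall>f\<in>H. \<forall>g\<in>H. \<forall>a b. ?T (\<lambda>x. a * f x + b * g x) = (\<lambda>x. a * ?T f x + b * ?T g x)"
  proof (intro ballI allI)
    fix f g a b assume f: "f \<in> H" and g: "g \<in> H"
    have fg: "(\<lambda>x. a * f x + b * g x) \<in> H" using H_lin f g by blast
    have r: "(\<lambda>x. a * ?T f x + b * ?T g x) \<in> H" using H_lin TH f g by blast
    have "AE y in \<mu>. koopman R (\<lambda>x. a * f x + b * g x) y = (\<lambda>x. a * ?T f x + b * ?T g x) y"
      using AE_Gd T_props(2)[OF iii f] T_props(2)[OF iii g]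
    proof (eventually_elim)
      case (elim y)
      then show ?case using K_lin[OF elim(1) f g] by simp
    qed
    then show "?T (\<lambda>x. a * f x + b * g x) = (\<lambda>x. a * ?T f x + b * ?T g x)"
      using UNIQ[OF T_props(1)[OF iii fg] r T_props(2)[OF iii fg]] by blast
  qed
  fix n \<sigma> l
  assume s: "\<forall>m. \<sigma> m \<in> H" and sn: "\<forall>m. nrm (?T (\<sigma> m)) \<le> n" and l: "l \<in> H"
    and lim: "(\<lambda>m. nrm (\<lambda>x. \<sigma> m x - l x)) \<longlonglongrightarrow> 0"
  define G where "G = {y \<in> Gd. \<forall>j. koopman R (\<sigma> j) y = ?T (\<sigma> j) y}"
  have AG: "AE y in \<mu>. y \<in> G"
  proof -
    have "AE y in \<mu>. \<forall>j. koopman R (\<sigma> j) y = ?T (\<sigma> j) y"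
      using T_props(2)[OF iii] s by (simp add: AE_all_countable)
    then show ?thesis using AE_Gd unfolding G_def by eventually_elim simp
  qed
  have conv: "\<forall>y\<in>G. (\<lambda>j. ?T (\<sigma> j) y) \<longlonglongrightarrow> koopman R l y"
  proof
    fix y assume y: "y \<in> G"
    then have yG: "y \<in> Gd" and e: "\<And>j. koopman R (\<sigma> j) y = ?T (\<sigma> j) y" unfolding G_def by auto
    have yX: "y \<in> X" using yG by (simp add: Gd_def)
    have b: "norm (koopman R (\<sigma> j) y - koopman R l y) \<le> nrm (\<lambda>x. \<sigma> j x - l x) * sqrt (q y)" for j
    proof -
      have d: "(\<lambda>x. 1 * \<sigma> j x + (-1) * l x) \<in> H" using H_lin s l by blast
      have "koopman R (\<lambda>x. 1 * \<sigma> j x + (-1) * l x) y = 1 * koopman R (\<sigma> j) y + (-1) * koopman R l y"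
        by (rule K_lin[OF yG]) (use s l in auto)
      then have kd: "koopman R (\<sigma> j) y - koopman R l y = koopman R (\<lambda>x. 1 * \<sigma> j x + (-1) * l x) y" by simp
      have "(koopman R (\<lambda>x. 1 * \<sigma> j x + (-1) * l x) y)\<^sup>2 \<le> (nrm (\<lambda>x. 1 * \<sigma> j x + (-1) * l x))\<^sup>2 * q y"
        by (rule H_sq_R(3)[OF d yG])
      then have "\<bar>koopman R (\<lambda>x. 1 * \<sigma> j x + (-1) * l x) y\<bar>\<^sup>2 \<le> (nrm (\<lambda>x. 1 * \<sigma> j x + (-1) * l x))\<^sup>2 * q y"
        by (simp only: power2_abs)
      then have "\<bar>koopman R (\<lambda>x. 1 * \<sigma> j x + (-1) * l x) y\<bar> \<le> sqrt ((nrm (\<lambda>x. 1 * \<sigma> j x + (-1) * l x))\<^sup>2 * q y)"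
        by (rule real_le_rsqrt)
      also have "\<dots> = nrm (\<lambda>x. 1 * \<sigma> j x + (-1) * l x) * sqrt (q y)"
        using nrm_nonneg[OF d] by (simp add: real_sqrt_mult)
      finally show ?thesis using kd by simp
    qed
    have l0: "(\<lambda>j. nrm (\<lambda>x. \<sigma> j x - l x) * sqrt (q y)) \<longlonglongrightarrow> 0"
      using tendsto_mult[OF lim tendsto_const, of "sqrt (q y)"] by simp
    have "(\<lambda>j. koopman R (\<sigma> j) y - koopman R l y) \<longlonglongrightarrow> 0"
      by (rule Lim_null_comparison[OF _ l0]) (use b in simp)
    then show "(\<lambda>j. ?T (\<sigma> j) y) \<longlonglongrightarrow> koopman R l y" using e by (simp add: LIM_zero_iff)
  qed
  have TsH: "\<forall>j. ?T (\<sigma> j) \<in> H" using TH s by blast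
  obtain g where g: "g \<in> H" "nrm g \<le> n" "\<forall>y\<in>G. g y = koopman R l y"
    using weak_limit[OF TsH sn conv] by blast
  have "AE y in \<mu>. koopman R l y = g y" using AG by eventually_elim (use g(3) in simp)
  then have "?T l = g" by (rule UNIQ[OF T_props(1)[OF iii l] g(1) T_props(2)[OF iii l]])
  then show "nrm (?T l) \<le> n" using g(2) by simp
qed

lemma main:
  "((\<forall>\<psi>\<in>H. \<exists>\<phi>\<in>H. AE x in \<mu>. koopman R \<psi> x = \<phi> x)
     \<longleftrightarrow> (KH_dom \<mu> k H R = H \<and> (\<exists>B. \<forall>\<psi>\<in>H. hnorm ip (KH \<mu> k H R \<psi>) \<le> B * hnorm ip \<psi>)))
   \<and> ((KH_dom \<mu> k H R = H \<and> (\<exists>B. \<forall>\<psi>\<in>H. hnorm ip (KH \<mu> k H R \<psi>) \<le> B * hnorm ip \<psi>))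
     \<longleftrightarrow> CHt \<mu> k R ` H \<subseteq> CH \<mu> k ` H)"
proof -
  have i_iii: "(\<forall>\<psi>\<in>H. \<exists>\<phi>\<in>H. AE x in \<mu>. koopman R \<psi> x = \<phi> x) \<longleftrightarrow> CHt \<mu> k R ` H \<subseteq> CH \<mu> k ` H"
  proof
    assume i: "\<forall>\<psi>\<in>H. \<exists>\<phi>\<in>H. AE x in \<mu>. koopman R \<psi> x = \<phi> x"
    show "CHt \<mu> k R ` H \<subseteq> CH \<mu> k ` H"
    proof
      fix z assume "z \<in> CHt \<mu> k R ` H"
      then obtain \<psi> where psi: "\<psi> \<in> H" "z = CHt \<mu> k R \<psi>" by blast
      then obtain \<phi> where phi: "\<phi> \<in> H" "AE x in \<mu>. koopman R \<psi> x = \<phi> x" using i by blast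
      then have "CH \<mu> k \<phi> = CHt \<mu> k R \<psi>" using KEY[OF psi(1) phi(1)] by simp
      then show "z \<in> CH \<mu> k ` H" using psi phi by force
    qed
  next
    assume iii: "CHt \<mu> k R ` H \<subseteq> CH \<mu> k ` H"
    show "\<forall>\<psi>\<in>H. \<exists>\<phi>\<in>H. AE x in \<mu>. koopman R \<psi> x = \<phi> x"
      using T_props[OF iii] by blast
  qed
  have ii_iii: "(KH_dom \<mu> k H R = H \<and> (\<exists>B. \<forall>\<psi>\<in>H. hnorm ip (KH \<mu> k H R \<psi>) \<le> B * hnorm ip \<psi>))
     \<longleftrightarrow> CHt \<mu> k R ` H \<subseteq> CH \<mu> k ` H"
  proof
    assume "KH_dom \<mu> k H R = H \<and> (\<exists>B. \<forall>\<psi>\<in>H. hnorm ip (KH \<mu> k H R \<psi>) \<le> B * hnorm ip \<psi>)"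
    then have "KH_dom \<mu> k H R = H" by blast
    then show "CHt \<mu> k R ` H \<subseteq> CH \<mu> k ` H" unfolding KH_dom_def by blast
  next
    assume iii: "CHt \<mu> k R ` H \<subseteq> CH \<mu> k ` H"
    have "KH_dom \<mu> k H R = H" unfolding KH_dom_def using iii by blast
    moreover have "\<exists>B. \<forall>\<psi>\<in>H. hnorm ip (KH \<mu> k H R \<psi>) \<le> B * hnorm ip \<psi>"
      using bound[OF iii] unfolding nrm_def .
    ultimately show "KH_dom \<mu> k H R = H \<and> (\<exists>B. \<forall>\<psi>\<in>H. hnorm ip (KH \<mu> k H R \<psi>) \<le> B * hnorm ip \<psi>)" by blast
  qed
  show ?thesis using i_iii ii_iii by blast
qed

end

theorem proposition4p4:
  fixes X :: "(real^'d) set"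
    and \<mu> :: "(real^'d) measure"
    and \<rho> :: "real \<Rightarrow> real^'d \<Rightarrow> (real^'d) measure"
    and k :: "real^'d \<Rightarrow> real^'d \<Rightarrow> real"
    and H :: "(real^'d \<Rightarrow> real) set"
    and ip :: "(real^'d \<Rightarrow> real) \<Rightarrow> (real^'d \<Rightarrow> real) \<Rightarrow> real"
    and t :: real
  assumes mu_prob: "prob_space \<mu>"
    and mu_space: "space \<mu> = X"
    and mu_sets: "sets \<mu> = sets (restrict_space borel X)"
    and rho_kernel: "\<And>s. s \<ge> 0 \<Longrightarrow> \<rho> s \<in> \<mu> \<rightarrow>\<^sub>M prob_algebra \<mu>"
    and rho_invariant: "\<And>s. s \<ge> 0 \<Longrightarrow> bind \<mu> (\<rho> s) = \<mu>"
    and k_cont: "continuous_on (X \<times> X) (\<lambda>(x, y). k x y)"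
    and k_pd: "pd_kernel X k"
    and rkhs: "is_rkhs X k H ip"
    and A1: "(\<lambda>x. k x x) \<in> L2 \<mu>"
    and A2: "\<And>\<psi>. \<psi> \<in> L2 \<mu> \<Longrightarrow>
               (\<integral>x. (\<integral>y. k x y * \<psi> x * \<psi> y \<partial>\<mu>) \<partial>\<mu>) = 0 \<Longrightarrow> (AE x in \<mu>. \<psi> x = 0)"
    and A3: "\<And>\<psi>. \<psi> \<in> H \<Longrightarrow> (AE x in \<mu>. \<psi> x = 0) \<Longrightarrow> \<psi> = (\<lambda>x. 0)"
    and t_pos: "t > 0"
  shows "((\<forall>\<psi>\<in>H. \<exists>\<phi>\<in>H. AE x in \<mu>. koopman (\<rho> t) \<psi> x = \<phi> x)
           \<longleftrightarrow> (KH_dom \<mu> k H (\<rho> t) = H \<and>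
                (\<exists>B. \<forall>\<psi>\<in>H. hnorm ip (KH \<mu> k H (\<rho> t) \<psi>) \<le> B * hnorm ip \<psi>)))
       \<and> ((KH_dom \<mu> k H (\<rho> t) = H \<and>
                (\<exists>B. \<forall>\<psi>\<in>H. hnorm ip (KH \<mu> k H (\<rho> t) \<psi>) \<le> B * hnorm ip \<psi>))
           \<longleftrightarrow> CHt \<mu> k (\<rho> t) ` H \<subseteq> CH \<mu> k ` H)"
proof -
  have Rk: "\<rho> t \<in> \<mu> \<rightarrow>\<^sub>M prob_algebra \<mu>" using rho_kernel t_pos by simp
  have inv: "bind \<mu> (\<rho> t) = \<mu>" using rho_invariant t_pos by simp
  have M: "mk X k H ip \<mu> (\<rho> t)"
    by (rule mk.intro[OF rkh.intro[OF rkhs] mk_axioms.intro[OF mu_prob mu_space mu_sets Rk inv k_cont A1 A2 A3]])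
  show ?thesis by (rule mk.main[OF M])
qed

end
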